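(* Let $(S,X,T)$ and $g^r_\epsilon(P_{S,X,T})$ be as defined below. If $S=f(T)$ for some deterministic function $f$, then for all $\epsilon\geq 0$ and all $r$ with $H(X\mid S)+\epsilon\leq r< H(X)$, $$g^{r}_{\epsilon}(P_{S,X,T})=H(T\mid S)+\epsilon .$$
   Context: $S$ takes values in a finite alphabet, $X$ and $T$ in finite or countably infinite alphabets, all with finite entropies. For $r,\epsilon\geq 0$, $$g^{r}_{\epsilon}(P_{S,X,T})=\sup_{P_{Y\mid S,X,T}:\ I(Y;S)\leq \epsilon,\ I(X;Y)\leq r} I(Y;T),$$ the supremum being over conditional distributions of a discrete random variable $Y$ given $(S,X,T)$. *)

theory Defs
  imports "HOL-Probability.Probability"
begin

text \<open>Discrete information measures (in bits) for probability mass functions.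
  Sums of nonnegative terms are taken in ennreal, so they are always defined
  (possibly infinite).\<close>

definition entropy_pmf :: "'a pmf \<Rightarrow> ennreal" where
  "entropy_pmf p = (\<Sum>\<^sub>\<infinity>a. ennreal (- pmf p a * log 2 (pmf p a)))"

definition cond_entropy_pmf :: "('a \<times> 'b) pmf \<Rightarrow> ennreal" where
  "cond_entropy_pmf Q = (\<Sum>\<^sub>\<infinity>z. ennreal (- pmf Q z * log 2 (pmf Q z / pmf (map_pmf snd Q) (snd z))))"

text \<open>Mutual information I(A;B) = sum over (a,b) of p(a,b) log (p(a,b)/(p(a)p(b))),
  the (possibly infinite) series being evaluated as positive part minus negative part
  (the negative part is always finite).\<close>
definition mi_term :: "('a \<times> 'b) pmf \<Rightarrow> 'a \<times> 'b \<Rightarrow> real" where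
  "mi_term Q z = pmf Q z * log 2 (pmf Q z / (pmf (map_pmf fst Q) (fst z) * pmf (map_pmf snd Q) (snd z)))"

definition mutual_info_pmf :: "('a \<times> 'b) pmf \<Rightarrow> ennreal" where
  "mutual_info_pmf Q = (\<Sum>\<^sub>\<infinity>z. ennreal (mi_term Q z)) - (\<Sum>\<^sub>\<infinity>z. ennreal (- mi_term Q z))"

text \<open>Joint distribution of ((S,X,T),Y) obtained from P_{S,X,T} and a channel P_{Y|S,X,T}.
  Y takes values in nat (any discrete alphabet embeds into nat).\<close>
definition joint_SXTY :: "('s \<times> 'x \<times> 't) pmf \<Rightarrow> ('s \<times> 'x \<times> 't \<Rightarrow> nat pmf)
    \<Rightarrow> (('s \<times> 'x \<times> 't) \<times> nat) pmf" where
  "joint_SXTY P K = bind_pmf P (\<lambda>w. map_pmf (\<lambda>y. (w, y)) (K w))"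

definition g_fun :: "real \<Rightarrow> real \<Rightarrow> ('s \<times> 'x \<times> 't) pmf \<Rightarrow> ennreal" where
  "g_fun r \<epsilon> P =
     (SUP K \<in> {K. mutual_info_pmf (map_pmf (\<lambda>((s,x,t),y). (y,s)) (joint_SXTY P K)) \<le> ennreal \<epsilon>
               \<and> mutual_info_pmf (map_pmf (\<lambda>((s,x,t),y). (x,y)) (joint_SXTY P K)) \<le> ennreal r}.
        mutual_info_pmf (map_pmf (\<lambda>((s,x,t),y). (y,t)) (joint_SXTY P K)))"

end

theory Submission
  imports Defs
begin


lemma summable_enn[simp]: "(f :: 'a \<Rightarrow> ennreal) summable_on A"
  by (rule nonneg_summable_on_complete) simp

lemma infsum_ennreal_nn_integral:
  fixes f :: "'a::countable \<Rightarrow> ennreal"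
  shows "infsum f UNIV = (\<integral>\<^sup>+x. f x \<partial>count_space UNIV)"
proof -
  define F where "F n = {x::'a. to_nat x < n}" for n
  have finF: "finite (F n)" for n
  proof -
    have "F n = to_nat -` {..<n}" by (auto simp: F_def)
    then show ?thesis using finite_vimageI[OF finite_lessThan[of n] inj_to_nat] by simp
  qed
  have inc: "incseq (\<lambda>n x. f x * indicator (F n) x)"
    by (auto simp: incseq_def le_fun_def F_def indicator_def)
  have "(\<integral>\<^sup>+x. f x \<partial>count_space UNIV) = (\<integral>\<^sup>+x. (SUP n. f x * indicator (F n) x) \<partial>count_space UNIV)"
  proof (intro nn_integral_cong)
    fix x
    have "(SUP n. f x * indicator (F n) x) = f x"
    proof (rule antisym)
      show "(SUP n. f x * indicator (F n) x) \<le> f x"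
        by (auto intro!: SUP_least simp: indicator_def)
      show "f x \<le> (SUP n. f x * indicator (F n) x)"
        by (rule SUP_upper2[of "Suc (to_nat x)"]) (auto simp: F_def)
    qed
    then show "f x = (SUP n. f x * indicator (F n) x)" by simp
  qed
  also have "\<dots> = (SUP n. \<integral>\<^sup>+x. f x * indicator (F n) x \<partial>count_space UNIV)"
    by (rule nn_integral_monotone_convergence_SUP[OF inc]) simp
  also have "\<dots> = (SUP n. sum f (F n))"
    by (subst nn_integral_count_space_indicator[symmetric, where X="F n" for n], simp)
       (simp add: finF nn_integral_count_space_finite)
  also have "\<dots> = (SUP G\<in>{G. finite G \<and> G \<subseteq> UNIV}. sum f G)"
  proof (rule antisym)
    show "(SUP n. sum f (F n)) \<le> (SUP G\<in>{G. finite G \<and> G \<subseteq> UNIV}. sum f G)"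
      by (intro SUP_least SUP_upper2[where i="F n" for n]) (auto simp: finF)
    show "(SUP G\<in>{G. finite G \<and> G \<subseteq> UNIV}. sum f G) \<le> (SUP n. sum f (F n))"
    proof (intro SUP_least, clarsimp)
      fix G :: "'a set" assume G: "finite G"
      have "G \<subseteq> F (Suc (Max (to_nat ` G)))"
        using G by (auto simp: F_def less_Suc_eq_le)
      then have "sum f G \<le> sum f (F (Suc (Max (to_nat ` G))))"
        by (intro sum_mono2 finF) auto
      then show "sum f G \<le> (SUP n. sum f (F n))"
        by (rule order_trans) (rule SUP_upper, simp)
    qed
  qed
  also have "\<dots> = infsum f UNIV"
    by (rule nonneg_infsum_complete[symmetric]) simp
  finally show ?thesis ..
qed

lemma infsum_pmf_nn_integral:
  fixes Q :: "'a::countable pmf" and h :: "'a \<Rightarrow> ennreal"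
  shows "(\<Sum>\<^sub>\<infinity>z. ennreal (pmf Q z) * h z) = (\<integral>\<^sup>+z. h z \<partial>measure_pmf Q)"
  by (simp add: infsum_ennreal_nn_integral nn_integral_measure_pmf)

lemma infsum_pmf_map:
  fixes Q :: "'a::countable pmf" and \<phi> :: "'a \<Rightarrow> 'b::countable" and h :: "'b \<Rightarrow> ennreal"
  shows "(\<Sum>\<^sub>\<infinity>z. ennreal (pmf Q z) * h (\<phi> z)) = (\<Sum>\<^sub>\<infinity>u. ennreal (pmf (map_pmf \<phi> Q) u) * h u)"
  by (simp add: infsum_pmf_nn_integral)

lemma infsum_pmf_1:
  fixes Q :: "'a::countable pmf"
  shows "(\<Sum>\<^sub>\<infinity>z. ennreal (pmf Q z)) = 1"
  using infsum_pmf_nn_integral[of Q "\<lambda>_. 1"] by (simp add: measure_pmf.emeasure_space_1)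

lemma pmf_le_fst: "pmf R (a,b) \<le> pmf (map_pmf fst R) a"
proof -
  have "pmf R (a,b) = measure R {(a,b)}" by (simp add: measure_pmf_single)
  also have "\<dots> \<le> measure R (fst -` {a})" by (intro measure_pmf.finite_measure_mono) auto
  finally show ?thesis by (simp add: pmf_map)
qed

lemma pmf_le_snd: "pmf R (a,b) \<le> pmf (map_pmf snd R) b"
proof -
  have "pmf R (a,b) = measure R {(a,b)}" by (simp add: measure_pmf_single)
  also have "\<dots> \<le> measure R (snd -` {b})" by (intro measure_pmf.finite_measure_mono) auto
  finally show ?thesis by (simp add: pmf_map)
qed

lemma pmf_fst_finite:
  fixes R :: "('a \<times> 's::finite) pmf"
  shows "pmf (map_pmf fst R) a = (\<Sum>s\<in>UNIV. pmf R (a,s))"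
proof -
  have "pmf (map_pmf fst R) a = measure R (fst -` {a})" by (rule pmf_map)
  also have "\<dots> = measure R (Pair a ` UNIV)" by (rule arg_cong[where f="measure R"]) auto
  also have "\<dots> = sum (pmf R) (Pair a ` UNIV)" by (simp add: measure_measure_pmf_finite)
  also have "\<dots> = (\<Sum>s\<in>UNIV. pmf R (a,s))" by (subst sum.reindex) (auto simp: inj_on_def)
  finally show ?thesis .
qed

lemma neg_mi_term_le:
  "- mi_term Q (a,b) \<le> pmf (map_pmf fst Q) a * pmf (map_pmf snd Q) b / ln 2"
proof (cases "pmf Q (a,b) = 0")
  case True then show ?thesis by (simp add: mi_term_def)
next
  case False
  define p where "p = pmf Q (a,b)"
  define pa where "pa = pmf (map_pmf fst Q) a"
  define pb where "pb = pmf (map_pmf snd Q) b"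
  have p: "p > 0" using False pmf_nonneg[of Q "(a,b)"] unfolding p_def by linarith
  have pa: "pa \<ge> p" "pa \<le> 1" unfolding pa_def p_def by (rule pmf_le_fst, rule pmf_le_1)
  have pb: "pb \<ge> p" "pb \<le> 1" unfolding pb_def p_def by (rule pmf_le_snd, rule pmf_le_1)
  define x where "x = pa * pb / p"
  have x: "x > 0" unfolding x_def using p pa pb by simp
  have "ln x \<le> x - 1" using x by (rule ln_le_minus_one)
  have l: "log 2 (p / (pa * pb)) = - ln x / ln 2"
    unfolding x_def log_def using p pa pb by (simp add: ln_div)
  have "- mi_term Q (a,b) = p * ln x / ln 2"
    unfolding mi_term_def p_def[symmetric] pa_def[symmetric] pb_def[symmetric] fst_conv snd_conv l by simp
  also have "\<dots> \<le> p * (x - 1) / ln 2"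
    using \<open>ln x \<le> x - 1\<close> p by (intro divide_right_mono mult_left_mono) auto
  also have "\<dots> = (pa * pb - p) / ln 2" unfolding x_def using p by (simp add: field_simps)
  also have "\<dots> \<le> pa * pb / ln 2" using p by (intro divide_right_mono) auto
  finally show ?thesis unfolding pa_def pb_def .
qed

lemma neg_part_le:
  fixes Q :: "('a::countable \<times> 'b::countable) pmf"
  shows "(\<Sum>\<^sub>\<infinity>z. ennreal (- mi_term Q z)) \<le> ennreal (1 / ln 2)"
proof -
  let ?A = "map_pmf fst Q" and ?B = "map_pmf snd Q"
  have "(\<Sum>\<^sub>\<infinity>z. ennreal (- mi_term Q z)) \<le> (\<Sum>\<^sub>\<infinity>z. ennreal (pmf (pair_pmf ?A ?B) z) * ennreal (1 / ln 2))"
  proof (rule infsum_mono)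
    fix z :: "'a \<times> 'b"
    obtain a b where z: "z = (a,b)" by fastforce
    have "- mi_term Q (a,b) \<le> pmf (pair_pmf ?A ?B) (a,b) * (1 / ln 2)"
      using neg_mi_term_le[of Q a b] by (simp add: pmf_pair)
    then show "ennreal (- mi_term Q z) \<le> ennreal (pmf (pair_pmf ?A ?B) z) * ennreal (1 / ln 2)"
      unfolding z by (simp add: ennreal_mult'[symmetric] ennreal_leI)
  qed simp_all
  also have "\<dots> = ennreal (1 / ln 2)"
    by (simp add: infsum_pmf_nn_integral measure_pmf.emeasure_space_1)
  finally show ?thesis .
qed

lemma infsum_prod_finite:
  fixes F :: "'s::finite \<times> 'b::countable \<Rightarrow> ennreal"
  shows "infsum F UNIV = (\<Sum>s\<in>UNIV. \<Sum>\<^sub>\<infinity>b. F (s,b))"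
proof -
  have "infsum F UNIV = (\<integral>\<^sup>+z. (\<Sum>s\<in>UNIV. F z * indicator (Pair s ` UNIV) z) \<partial>count_space UNIV)"
    unfolding infsum_ennreal_nn_integral
  proof (intro nn_integral_cong)
    fix z :: "'s \<times> 'b"
    obtain s0 b where z: "z = (s0,b)" by fastforce
    have "(\<Sum>s\<in>UNIV. F z * indicator (Pair s ` UNIV) z) = (\<Sum>s\<in>{s0}. F z * indicator (Pair s ` UNIV) z)"
      by (intro sum.mono_neutral_right) (auto simp: z indicator_def)
    then show "F z = (\<Sum>s\<in>UNIV. F z * indicator (Pair s ` UNIV) z)" by (simp add: z)
  qed
  also have "\<dots> = (\<Sum>s\<in>UNIV. \<integral>\<^sup>+z. F z * indicator (Pair s ` UNIV) z \<partial>count_space UNIV)"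
    by (rule nn_integral_sum) simp
  also have "\<dots> = (\<Sum>s\<in>UNIV. \<Sum>\<^sub>\<infinity>b. F (s,b))"
  proof (intro sum.cong refl)
    fix s
    have "(\<integral>\<^sup>+z. F z * indicator (Pair s ` UNIV) z \<partial>count_space UNIV) = (\<integral>\<^sup>+z. F z \<partial>count_space (Pair s ` UNIV))"
      by (rule nn_integral_count_space_indicator[symmetric]) simp
    also have "\<dots> = (\<integral>\<^sup>+b. F (s,b) \<partial>count_space UNIV)"
      by (rule nn_integral_bij_count_space[symmetric]) (auto simp: bij_betw_def inj_on_def)
    finally show "(\<integral>\<^sup>+z. F z * indicator (Pair s ` UNIV) z \<partial>count_space UNIV) = (\<Sum>\<^sub>\<infinity>b. F (s,b))"
      by (simp add: infsum_ennreal_nn_integral)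
  qed
  finally show ?thesis .
qed

lemma infsum_sum_finite:
  fixes G :: "'s::finite \<Rightarrow> 'b::countable \<Rightarrow> ennreal"
  shows "(\<Sum>\<^sub>\<infinity>b. \<Sum>s\<in>UNIV. G s b) = (\<Sum>s\<in>UNIV. \<Sum>\<^sub>\<infinity>b. G s b)"
  unfolding infsum_ennreal_nn_integral by (rule nn_integral_sum) simp

lemma infsum_triple_pmf:
  fixes Q :: "('s::finite \<times> 'b::countable) pmf" and h :: "'s \<times> 'b \<Rightarrow> ennreal"
  shows "(\<Sum>\<^sub>\<infinity>b. \<Sum>s\<in>UNIV. ennreal (pmf Q (s,b)) * h (s,b)) = (\<integral>\<^sup>+z. h z \<partial>measure_pmf Q)"
proof -
  have "(\<Sum>\<^sub>\<infinity>b. \<Sum>s\<in>UNIV. ennreal (pmf Q (s,b)) * h (s,b)) = (\<Sum>s\<in>UNIV. \<Sum>\<^sub>\<infinity>b. ennreal (pmf Q (s,b)) * h (s,b))"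
    by (rule infsum_sum_finite)
  also have "\<dots> = (\<Sum>\<^sub>\<infinity>z. ennreal (pmf Q z) * h z)"
    by (rule infsum_prod_finite[where F="\<lambda>z. ennreal (pmf Q z) * h z", symmetric])
  also have "\<dots> = (\<integral>\<^sup>+z. h z \<partial>measure_pmf Q)" by (rule infsum_pmf_nn_integral)
  finally show ?thesis .
qed

lemma ennreal_posneg:
  fixes a c :: real and b :: "'i \<Rightarrow> real"
  assumes "finite I" "a \<le> (\<Sum>i\<in>I. b i) + c" "c \<ge> 0"
  shows "ennreal a + (\<Sum>i\<in>I. ennreal (- b i)) \<le> (\<Sum>i\<in>I. ennreal (b i)) + ennreal c + ennreal (- a)"
proof -
  have e: "ennreal x = ennreal (max x 0)" for x :: real by (simp add: max_def ennreal_neg)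
  have s1: "(\<Sum>i\<in>I. ennreal (- b i)) = ennreal (\<Sum>i\<in>I. max (- b i) 0)"
  proof -
    have "(\<Sum>i\<in>I. ennreal (- b i)) = (\<Sum>i\<in>I. ennreal (max (- b i) 0))"
      by (rule sum.cong[OF refl], rule e)
    also have "\<dots> = ennreal (\<Sum>i\<in>I. max (- b i) 0)" by (rule sum_ennreal) simp
    finally show ?thesis .
  qed
  have s2: "(\<Sum>i\<in>I. ennreal (b i)) = ennreal (\<Sum>i\<in>I. max (b i) 0)"
  proof -
    have "(\<Sum>i\<in>I. ennreal (b i)) = (\<Sum>i\<in>I. ennreal (max (b i) 0))"
      by (rule sum.cong[OF refl], rule e)
    also have "\<dots> = ennreal (\<Sum>i\<in>I. max (b i) 0)" by (rule sum_ennreal) simp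
    finally show ?thesis .
  qed
  have bb: "(\<Sum>i\<in>I. b i) = (\<Sum>i\<in>I. max (b i) 0) - (\<Sum>i\<in>I. max (- b i) 0)"
    by (simp add: sum_subtractf[symmetric]) (intro sum.cong; auto simp: max_def)
  define S1 where "S1 = (\<Sum>i\<in>I. max (- b i) 0)"
  define S2 where "S2 = (\<Sum>i\<in>I. max (b i) 0)"
  have S: "S1 \<ge> 0" "S2 \<ge> 0" unfolding S1_def S2_def by (auto intro: sum_nonneg)
  have ineq: "max a 0 + S1 \<le> S2 + c + max (- a) 0"
    using assms(2,3) bb unfolding S1_def S2_def by (simp add: max_def)
  show ?thesis
  proof (cases "a \<ge> 0")
    case True
    have "ennreal (a + S1) \<le> ennreal (S2 + c)" using ineq True by (intro ennreal_leI) simp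
    then show ?thesis using True S assms(3) unfolding s1 s2 S1_def[symmetric] S2_def[symmetric]
      by (simp add: ennreal_plus[symmetric] ennreal_neg del: ennreal_plus)
  next
    case False
    have "ennreal S1 \<le> ennreal (S2 + c + - a)" using ineq False by (intro ennreal_leI) simp
    then show ?thesis using False S assms(3) unfolding s1 s2 S1_def[symmetric] S2_def[symmetric]
      by (simp add: ennreal_plus[symmetric] ennreal_neg del: ennreal_plus)
  qed
qed

lemma log_sum_ineq:
  fixes a b :: "'i \<Rightarrow> real"
  assumes I: "finite I" and a: "\<And>i. a i \<ge> 0" and b: "\<And>i. b i \<ge> 0"
    and ab: "\<And>i. a i > 0 \<Longrightarrow> b i > 0"
  shows "sum a I * log 2 (sum a I / sum b I) \<le> (\<Sum>i\<in>I. a i * log 2 (a i / b i))"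
proof (cases "sum a I = 0")
  case True
  then have "\<forall>i\<in>I. a i = 0" using I a by (simp add: sum_nonneg_eq_0_iff)
  then show ?thesis using True by simp
next
  case False
  define A where "A = sum a I"
  define B where "B = sum b I"
  have A: "A > 0" using False a unfolding A_def by (simp add: order_le_neq_trans sum_nonneg)
  obtain j where j: "j \<in> I" "a j > 0" using False a by (metis (lifting) order_le_neq_trans sum.neutral)
  have B: "B > 0"
  proof -
    have "b j \<le> B" unfolding B_def using I j b by (intro member_le_sum) auto
    then show ?thesis using ab[OF j(2)] by simp
  qed
  have trm: "a i * log 2 (A / B) - a i * log 2 (a i / b i) \<le> (A * b i / B - a i) / ln 2" for i
  proof (cases "a i = 0")
    case True then show ?thesis using A B b[of i] by simp
  next
    case False
    then have ai: "a i > 0" using a[of i] by simp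
    have bi: "b i > 0" using ab[OF ai] .
    define x where "x = A * b i / (B * a i)"
    have x: "x > 0" unfolding x_def using A B ai bi by simp
    have "a i * log 2 (A / B) - a i * log 2 (a i / b i) = a i * ln x / ln 2"
      unfolding x_def log_def using A B ai bi by (simp add: ln_div ln_mult field_simps)
    also have "\<dots> \<le> a i * (x - 1) / ln 2"
      using ln_le_minus_one[OF x] ai by (intro divide_right_mono mult_left_mono) auto
    also have "\<dots> = (A * b i / B - a i) / ln 2" unfolding x_def using ai B by (simp add: field_simps)
    finally show ?thesis .
  qed
  have "(\<Sum>i\<in>I. a i * log 2 (A / B) - a i * log 2 (a i / b i)) \<le> (\<Sum>i\<in>I. (A * b i / B - a i) / ln 2)"
    by (intro sum_mono trm)
  also have "\<dots> = (A / B * B - A) / ln 2"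
    unfolding B_def A_def by (simp add: sum_divide_distrib[symmetric] sum_subtractf sum_distrib_left[symmetric] times_divide_eq_right[symmetric] del: times_divide_eq_right)
  also have "\<dots> = 0" using B by simp
  finally have "A * log 2 (A / B) - (\<Sum>i\<in>I. a i * log 2 (a i / b i)) \<le> 0"
    by (simp add: sum_subtractf sum_distrib_right[symmetric] A_def)
  then show ?thesis unfolding A_def B_def by simp
qed

lemma ennreal_arith:
  fixes a b c d e :: ennreal
  assumes "a + d \<le> c + e + b" "d \<noteq> \<top>" "b \<noteq> \<top>"
  shows "a - b \<le> (c - d) + e"
proof -
  have key: "ennreal (r - ra) \<le> ennreal (rb - rc) + ennreal rd"
    if "r + rc \<le> rb + rd + ra" "0 \<le> rd" for r ra rb rc rd :: real
  proof -
    have "ennreal (rb - rc) + ennreal rd = ennreal (max (rb - rc) 0) + ennreal rd"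
      by (simp add: max_def ennreal_neg)
    also have "\<dots> = ennreal (max (rb - rc) 0 + rd)" using that by (simp add: ennreal_plus)
    finally have eq: "ennreal (rb - rc) + ennreal rd = ennreal (max (rb - rc) 0 + rd)" .
    have "r - ra \<le> max (rb - rc) 0 + rd" using that by linarith
    then have "ennreal (r - ra) \<le> ennreal (max (rb - rc) 0 + rd)" by (rule ennreal_leI)
    then show ?thesis unfolding eq .
  qed
  show ?thesis
  using assms
  apply (cases a; cases b; cases c; cases d; cases e)
  apply (auto simp: ennreal_plus[symmetric] ennreal_minus ennreal_le_iff key top_unique simp del: ennreal_plus)
  done
qed

lemma pmf_map_ge: "pmf Q z \<le> pmf (map_pmf g Q) (g z)"
proof -
  have "pmf Q z = measure Q {z}" by (simp add: measure_pmf_single)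
  also have "\<dots> \<le> measure Q (g -` {g z})" by (intro measure_pmf.finite_measure_mono) auto
  finally show ?thesis by (simp add: pmf_map)
qed

lemma pmf_snd_finite:
  fixes R :: "('s::finite \<times> 'b) pmf"
  shows "pmf (map_pmf snd R) b = (\<Sum>s\<in>UNIV. pmf R (s,b))"
proof -
  have "pmf (map_pmf snd R) b = measure R (snd -` {b})" by (rule pmf_map)
  also have "\<dots> = measure R ((\<lambda>s. (s,b)) ` UNIV)" by (rule arg_cong[where f="measure R"]) auto
  also have "\<dots> = sum (pmf R) ((\<lambda>s. (s,b)) ` UNIV)" by (simp add: measure_measure_pmf_finite)
  also have "\<dots> = (\<Sum>s\<in>UNIV. pmf R (s,b))" by (subst sum.reindex) (auto simp: inj_on_def)
  finally show ?thesis .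
qed

lemma log2_le_0: "0 \<le> x \<Longrightarrow> x \<le> 1 \<Longrightarrow> log 2 x \<le> 0"
  by (cases "x = 0") (auto simp: log_def intro: divide_nonpos_pos)

lemma triple_to_map:
  fixes Q :: "('s::finite \<times> 'b::countable) pmf" and \<phi> :: "'s \<times> 'b \<Rightarrow> 'c::countable" and G :: "'c \<Rightarrow> real"
  shows "(\<Sum>\<^sub>\<infinity>b. \<Sum>s\<in>UNIV. ennreal (pmf Q (s,b) * G (\<phi> (s,b)))) = (\<Sum>\<^sub>\<infinity>u. ennreal (pmf (map_pmf \<phi> Q) u * G u))"
proof -
  have "(\<Sum>\<^sub>\<infinity>b. \<Sum>s\<in>UNIV. ennreal (pmf Q (s,b) * G (\<phi> (s,b)))) = (\<Sum>\<^sub>\<infinity>b. \<Sum>s\<in>UNIV. ennreal (pmf Q (s,b)) * ennreal (G (\<phi> (s,b))))"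
    by (simp add: ennreal_mult')
  also have "\<dots> = (\<integral>\<^sup>+z. ennreal (G (\<phi> z)) \<partial>measure_pmf Q)"
    by (rule infsum_triple_pmf)
  also have "\<dots> = (\<integral>\<^sup>+u. ennreal (G u) \<partial>measure_pmf (map_pmf \<phi> Q))" by simp
  also have "\<dots> = (\<Sum>\<^sub>\<infinity>u. ennreal (pmf (map_pmf \<phi> Q) u) * ennreal (G u))"
    by (rule infsum_pmf_nn_integral[symmetric])
  also have "\<dots> = (\<Sum>\<^sub>\<infinity>u. ennreal (pmf (map_pmf \<phi> Q) u * G u))"
    by (simp add: ennreal_mult')
  finally show ?thesis .
qed

lemma dpi:
  fixes Q :: "('s::finite \<times> 'x::countable \<times> 'y::countable) pmf"
  shows "mutual_info_pmf (map_pmf snd Q) \<le> mutual_info_pmf (map_pmf (\<lambda>(s,x,y).(y,s)) Q)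
           + cond_entropy_pmf (map_pmf (\<lambda>(s,x,y).(x,s)) Q)"
proof -
  define QXY where "QXY = map_pmf snd Q"
  define QYS where "QYS = map_pmf (\<lambda>(s,x,y).(y,s)) Q"
  define QXS where "QXS = map_pmf (\<lambda>(s,x,y).(x,s)) Q"
  define pX where "pX = pmf (map_pmf (\<lambda>(s,x,y). x) Q)"
  define pY where "pY = pmf (map_pmf (\<lambda>(s,x,y). y) Q)"
  define pS where "pS = pmf (map_pmf fst Q)"
  have mXY1: "map_pmf fst QXY = map_pmf (\<lambda>(s,x,y). x) Q" unfolding QXY_def by (simp add: map_pmf_comp case_prod_unfold)
  have mXY2: "map_pmf snd QXY = map_pmf (\<lambda>(s,x,y). y) Q" unfolding QXY_def by (simp add: map_pmf_comp case_prod_unfold)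
  have mYS1: "map_pmf fst QYS = map_pmf (\<lambda>(s,x,y). y) Q" unfolding QYS_def by (simp add: map_pmf_comp case_prod_unfold)
  have mYS2: "map_pmf snd QYS = map_pmf fst Q" unfolding QYS_def by (simp add: map_pmf_comp case_prod_unfold)
  have mXS1: "map_pmf fst QXS = map_pmf (\<lambda>(s,x,y). x) Q" unfolding QXS_def by (simp add: map_pmf_comp case_prod_unfold)
  have mXS2: "map_pmf snd QXS = map_pmf fst Q" unfolding QXS_def by (simp add: map_pmf_comp case_prod_unfold)
  define L where "L u = log 2 (pmf QYS u / (pY (fst u) * pS (snd u)))" for u
  define C where "C u = - log 2 (pmf QXS u / pS (snd u))" for u
  have miYS: "mi_term QYS u = pmf QYS u * L u" for u
    unfolding mi_term_def L_def mYS1 mYS2 pY_def pS_def ..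
  have ceXS: "- pmf QXS u * log 2 (pmf QXS u / pmf (map_pmf snd QXS) (snd u)) = pmf QXS u * C u" for u
    unfolding C_def mXS2 pS_def by simp
  have C0: "C u \<ge> 0" for u
  proof -
    obtain x s where u: "u = (x,s)" by fastforce
    have "pmf QXS (x,s) \<le> pS s" unfolding pS_def mXS2[symmetric] by (rule pmf_le_snd)
    moreover have "pS s \<ge> 0" unfolding pS_def by simp
    ultimately have "pmf QXS u / pS (snd u) \<le> 1" unfolding u by (auto simp: divide_le_eq_1)
    moreover have "pmf QXS u / pS (snd u) \<ge> 0" unfolding pS_def by simp
    ultimately show ?thesis unfolding C_def using log2_le_0[of "pmf QXS u / pS (snd u)"] by simp
  qed
  have pXY: "pmf QXY (x,y) = (\<Sum>s\<in>UNIV. pmf Q (s,x,y))" for x y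
    unfolding QXY_def by (rule pmf_snd_finite)
  have pXsum: "pX x = (\<Sum>s\<in>UNIV. pmf QXS (x,s))" for x
    unfolding pX_def mXS1[symmetric] by (rule pmf_fst_finite)
  have le_YS: "pmf Q (s,x,y) \<le> pmf QYS (y,s)" for s x y
    unfolding QYS_def using pmf_map_ge[of Q "(s,x,y)" "\<lambda>(s,x,y).(y,s)"] by simp
  have le_XS: "pmf Q (s,x,y) \<le> pmf QXS (x,s)" for s x y
    unfolding QXS_def using pmf_map_ge[of Q "(s,x,y)" "\<lambda>(s,x,y).(x,s)"] by simp
  have le_Y: "pmf QYS (y,s) \<le> pY y" for y s
    unfolding pY_def mYS1[symmetric] by (rule pmf_le_fst)
  have le_S: "pmf QYS (y,s) \<le> pS s" for y s
    unfolding pS_def mYS2[symmetric] by (rule pmf_le_snd)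
  have le_S': "pmf QXS (x,s) \<le> pS s" for x s
    unfolding pS_def mXS2[symmetric] by (rule pmf_le_snd)
  have pointwise: "mi_term QXY (x,y) \<le> (\<Sum>s\<in>UNIV. pmf Q (s,x,y) * L (y,s)) + (\<Sum>s\<in>UNIV. pmf Q (s,x,y) * C (x,s))"
    for x y
  proof -
    define a where "a s = pmf Q (s,x,y)" for s
    define b where "b s = pmf QXS (x,s) * pY y" for s
    have a0: "a s \<ge> 0" for s unfolding a_def by simp
    have b0: "b s \<ge> 0" for s unfolding b_def pY_def by simp
    have ab: "a s > 0 \<Longrightarrow> b s > 0" for s
    proof -
      assume as: "a s > 0"
      have "pmf QXS (x,s) > 0" using as le_XS[of s x y] unfolding a_def by linarith
      moreover have "pY y > 0" using as le_YS[of s x y] le_Y[of y s] unfolding a_def by linarith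
      ultimately show ?thesis unfolding b_def by simp
    qed
    have sa: "sum a UNIV = pmf QXY (x,y)" unfolding a_def pXY ..
    have sb: "sum b UNIV = pX x * pY y" unfolding b_def pXsum by (simp add: sum_distrib_right)
    have "mi_term QXY (x,y) = sum a UNIV * log 2 (sum a UNIV / sum b UNIV)"
      unfolding mi_term_def sa sb mXY1 mXY2 pX_def pY_def by simp
    also have "\<dots> \<le> (\<Sum>s\<in>UNIV. a s * log 2 (a s / b s))"
      by (rule log_sum_ineq[OF _ a0 b0 ab]) simp
    also have "\<dots> \<le> (\<Sum>s\<in>UNIV. pmf Q (s,x,y) * L (y,s) + pmf Q (s,x,y) * C (x,s))"
    proof (intro sum_mono)
      fix s
      show "a s * log 2 (a s / b s) \<le> pmf Q (s,x,y) * L (y,s) + pmf Q (s,x,y) * C (x,s)"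
      proof (cases "a s = 0")
        case True then show ?thesis unfolding a_def by simp
      next
        case False
        then have as: "a s > 0" using a0[of s] by simp
        have xs: "pmf QXS (x,s) > 0" using as le_XS[of s x y] unfolding a_def by linarith
        have ys: "pmf QYS (y,s) > 0" using as le_YS[of s x y] unfolding a_def by linarith
        have py: "pY y > 0" using ys le_Y[of y s] by linarith
        have ps: "pS s > 0" using ys le_S[of y s] by linarith
        have "log 2 (a s / b s) \<le> log 2 (pmf QYS (y,s) / b s)"
          using as ab[OF as] le_YS[of s x y] unfolding a_def
          by (subst log_le_cancel_iff) (auto intro: divide_right_mono)
        also have "\<dots> = L (y,s) + C (x,s)"
          unfolding L_def C_def b_def log_def using xs ys py ps
          by (simp add: ln_div ln_mult diff_divide_distrib add_divide_distrib)
        finally have "a s * log 2 (a s / b s) \<le> a s * (L (y,s) + C (x,s))"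
          using as by (intro mult_left_mono) auto
        then show ?thesis unfolding a_def by (simp add: distrib_left)
      qed
    qed
    also have "\<dots> = (\<Sum>s\<in>UNIV. pmf Q (s,x,y) * L (y,s)) + (\<Sum>s\<in>UNIV. pmf Q (s,x,y) * C (x,s))"
      by (rule sum.distrib)
    finally show ?thesis .
  qed

  have pw2: "ennreal (mi_term QXY p) + (\<Sum>s\<in>UNIV. ennreal (pmf Q (s,p) * (- L ((\<lambda>(s,x,y).(y,s)) (s,p)))))
      \<le> (\<Sum>s\<in>UNIV. ennreal (pmf Q (s,p) * L ((\<lambda>(s,x,y).(y,s)) (s,p))))
         + (\<Sum>s\<in>UNIV. ennreal (pmf Q (s,p) * C ((\<lambda>(s,x,y).(x,s)) (s,p)))) + ennreal (- mi_term QXY p)" for p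
  proof -
    obtain x y where p: "p = (x,y)" by fastforce
    have "ennreal (mi_term QXY (x,y)) + (\<Sum>s\<in>UNIV. ennreal (- (pmf Q (s,x,y) * L (y,s))))
      \<le> (\<Sum>s\<in>UNIV. ennreal (pmf Q (s,x,y) * L (y,s))) + ennreal (\<Sum>s\<in>UNIV. pmf Q (s,x,y) * C (x,s)) + ennreal (- mi_term QXY (x,y))"
      by (rule ennreal_posneg[OF _ pointwise]) (auto intro!: sum_nonneg mult_nonneg_nonneg C0)
    moreover have "ennreal (\<Sum>s\<in>UNIV. pmf Q (s,x,y) * C (x,s)) = (\<Sum>s\<in>UNIV. ennreal (pmf Q (s,x,y) * C (x,s)))"
      by (rule sum_ennreal[symmetric]) (auto intro!: mult_nonneg_nonneg C0)
    ultimately show ?thesis unfolding p by simp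
  qed
  define PXY where "PXY = (\<Sum>\<^sub>\<infinity>u. ennreal (mi_term QXY u))"
  define NXY where "NXY = (\<Sum>\<^sub>\<infinity>u. ennreal (- mi_term QXY u))"
  define PYS where "PYS = (\<Sum>\<^sub>\<infinity>u. ennreal (mi_term QYS u))"
  define NYS where "NYS = (\<Sum>\<^sub>\<infinity>u. ennreal (- mi_term QYS u))"
  define CE where "CE = cond_entropy_pmf QXS"
  have eP: "(\<Sum>\<^sub>\<infinity>p. \<Sum>s\<in>UNIV. ennreal (pmf Q (s,p) * L ((\<lambda>(s,x,y).(y,s)) (s,p)))) = PYS"
    unfolding PYS_def miYS using triple_to_map[of Q L "\<lambda>(s,x,y).(y,s)"] unfolding QYS_def by simp
  have eN: "(\<Sum>\<^sub>\<infinity>p. \<Sum>s\<in>UNIV. ennreal (pmf Q (s,p) * (- L ((\<lambda>(s,x,y).(y,s)) (s,p))))) = NYS"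
    unfolding NYS_def miYS using triple_to_map[of Q "\<lambda>u. - L u" "\<lambda>(s,x,y).(y,s)"] unfolding QYS_def by simp
  have eC: "(\<Sum>\<^sub>\<infinity>p. \<Sum>s\<in>UNIV. ennreal (pmf Q (s,p) * C ((\<lambda>(s,x,y).(x,s)) (s,p)))) = CE"
    unfolding CE_def cond_entropy_pmf_def ceXS using triple_to_map[of Q C "\<lambda>(s,x,y).(x,s)"] unfolding QXS_def by simp
  have "PXY + NYS \<le> PYS + CE + NXY"
  proof -
    have "PXY + NYS = (\<Sum>\<^sub>\<infinity>p. ennreal (mi_term QXY p) + (\<Sum>s\<in>UNIV. ennreal (pmf Q (s,p) * (- L ((\<lambda>(s,x,y).(y,s)) (s,p))))))"
      unfolding PXY_def eN[symmetric] by (rule infsum_add[symmetric]) simp_all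
    also have "\<dots> \<le> (\<Sum>\<^sub>\<infinity>p. (\<Sum>s\<in>UNIV. ennreal (pmf Q (s,p) * L ((\<lambda>(s,x,y).(y,s)) (s,p))))
         + (\<Sum>s\<in>UNIV. ennreal (pmf Q (s,p) * C ((\<lambda>(s,x,y).(x,s)) (s,p)))) + ennreal (- mi_term QXY p))"
      by (rule infsum_mono, simp, simp, rule pw2)
    also have "\<dots> = PYS + CE + NXY"
      unfolding eP[symmetric] eC[symmetric] NXY_def
      by (simp add: infsum_add)
    finally show ?thesis .
  qed
  moreover have "NYS \<noteq> \<top>" unfolding NYS_def using neg_part_le[of QYS] by (auto simp: top_unique)
  moreover have "NXY \<noteq> \<top>" unfolding NXY_def using neg_part_le[of QXY] by (auto simp: top_unique)
  ultimately have "PXY - NXY \<le> (PYS - NYS) + CE" by (rule ennreal_arith)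
  then show ?thesis unfolding mutual_info_pmf_def PXY_def NXY_def PYS_def NYS_def CE_def QXY_def QYS_def QXS_def .
qed

lemma infsum_inj_reindex:
  fixes F :: "'a \<Rightarrow> ennreal"
  assumes "inj h" "\<And>u. u \<notin> range h \<Longrightarrow> F u = 0"
  shows "infsum F UNIV = infsum (\<lambda>v. F (h v)) UNIV"
proof -
  have "infsum F UNIV = infsum F (range h)"
    by (rule infsum_cong_neutral) (use assms(2) in auto)
  also have "\<dots> = infsum (F \<circ> h) UNIV" by (rule infsum_reindex) (use assms(1) in \<open>simp add: inj_on_def inj_def\<close>)
  finally show ?thesis by (simp add: comp_def)
qed

lemma mi_swap: "mutual_info_pmf (map_pmf prod.swap R) = mutual_info_pmf R"
proof -
  have mt: "mi_term (map_pmf prod.swap R) (prod.swap u) = mi_term R u" for u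
  proof -
    obtain a b where u: "u = (a,b)" by fastforce
    have "pmf (map_pmf prod.swap R) (prod.swap u) = pmf R u" by (rule pmf_map_inj') simp
    moreover have "map_pmf fst (map_pmf prod.swap R) = map_pmf snd R" by (simp add: map_pmf_comp)
    moreover have "map_pmf snd (map_pmf prod.swap R) = map_pmf fst R" by (simp add: map_pmf_comp)
    ultimately show ?thesis unfolding mi_term_def u by (simp add: mult.commute)
  qed
  have "(\<Sum>\<^sub>\<infinity>u. ennreal (G (mi_term (map_pmf prod.swap R) u))) = (\<Sum>\<^sub>\<infinity>u. ennreal (G (mi_term R u)))" for G
    by (subst infsum_inj_reindex[where h=prod.swap]) (auto simp: mt)
  from this[of "\<lambda>x. x"] this[of "\<lambda>x. - x"] show ?thesis unfolding mutual_info_pmf_def by simp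
qed

lemma mi_inj_fst:
  fixes R :: "('a \<times> 'b) pmf" and g :: "'a \<Rightarrow> 'c"
  assumes g: "inj g"
  shows "mutual_info_pmf (map_pmf (map_prod g id) R) = mutual_info_pmf R"
proof -
  let ?R = "map_pmf (map_prod g id) R"
  have ih: "inj (map_prod g (id :: 'b \<Rightarrow> 'b))" using g by (auto simp: inj_def)
  have mt: "mi_term ?R (map_prod g id u) = mi_term R u" for u
  proof -
    obtain a b where u: "u = (a,b)" by fastforce
    have "pmf ?R (map_prod g id u) = pmf R u" by (rule pmf_map_inj') (use g in \<open>auto simp: inj_def\<close>)
    moreover have "map_pmf fst ?R = map_pmf g (map_pmf fst R)" by (simp add: map_pmf_comp)
    moreover have "map_pmf snd ?R = map_pmf snd R" by (simp add: map_pmf_comp)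
    moreover have "pmf (map_pmf g (map_pmf fst R)) (g a) = pmf (map_pmf fst R) a" by (rule pmf_map_inj'[OF g])
    ultimately show ?thesis unfolding mi_term_def u by simp
  qed
  have out: "mi_term ?R u = 0" if "u \<notin> range (map_prod g id)" for u
  proof -
    have "pmf ?R u = 0" using that by (intro pmf_map_outside) auto
    then show ?thesis by (simp add: mi_term_def)
  qed
  have "(\<Sum>\<^sub>\<infinity>u. ennreal (G (mi_term ?R u))) = (\<Sum>\<^sub>\<infinity>u. ennreal (G (mi_term R u)))" if "G 0 = 0" for G
    by (subst infsum_inj_reindex[where h="map_prod g id"]) (auto simp: mt ih out that)
  from this[of "\<lambda>x. x"] this[of "\<lambda>x. - x"] show ?thesis unfolding mutual_info_pmf_def by simp
qed

lemma ennreal_neg_mult: "0 \<le> x \<Longrightarrow> ennreal (- x * y) = ennreal x * ennreal (- y)"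
  by (metis ennreal_mult' minus_mult_right mult_minus_left)

lemma entropy_integral:
  fixes p :: "'a::countable pmf"
  shows "entropy_pmf p = (\<integral>\<^sup>+a. ennreal (- log 2 (pmf p a)) \<partial>measure_pmf p)"
proof -
  have "entropy_pmf p = (\<Sum>\<^sub>\<infinity>a. ennreal (pmf p a) * ennreal (- log 2 (pmf p a)))"
    unfolding entropy_pmf_def by (rule infsum_cong) (rule ennreal_neg_mult, simp)
  then show ?thesis using infsum_pmf_nn_integral[of p "\<lambda>a. ennreal (- log 2 (pmf p a))"] by simp
qed

lemma cond_entropy_integral:
  fixes R :: "('a::countable \<times> 'b::countable) pmf"
  shows "cond_entropy_pmf R = (\<integral>\<^sup>+z. ennreal (- log 2 (pmf R z / pmf (map_pmf snd R) (snd z))) \<partial>measure_pmf R)"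
proof -
  have "cond_entropy_pmf R = (\<Sum>\<^sub>\<infinity>z. ennreal (pmf R z) * ennreal (- log 2 (pmf R z / pmf (map_pmf snd R) (snd z))))"
    unfolding cond_entropy_pmf_def by (rule infsum_cong) (rule ennreal_neg_mult, simp)
  then show ?thesis using infsum_pmf_nn_integral[of R "\<lambda>z. ennreal (- log 2 (pmf R z / pmf (map_pmf snd R) (snd z)))"] by simp
qed

lemma entropy_le_chain:
  fixes R :: "('a::countable \<times> 's::countable) pmf"
  shows "entropy_pmf (map_pmf fst R) \<le> entropy_pmf (map_pmf snd R) + cond_entropy_pmf R"
proof -
  have "entropy_pmf (map_pmf fst R) = (\<integral>\<^sup>+z. ennreal (- log 2 (pmf (map_pmf fst R) (fst z))) \<partial>measure_pmf R)"
    unfolding entropy_integral by simp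
  also have "\<dots> \<le> (\<integral>\<^sup>+z. ennreal (- log 2 (pmf (map_pmf snd R) (snd z))) + ennreal (- log 2 (pmf R z / pmf (map_pmf snd R) (snd z))) \<partial>measure_pmf R)"
  proof (rule nn_integral_mono_AE, rule AE_pmfI)
    fix z assume z: "z \<in> set_pmf R"
    obtain a s where zz: "z = (a,s)" by fastforce
    define pz where "pz = pmf R z"
    define pa where "pa = pmf (map_pmf fst R) a"
    define ps where "ps = pmf (map_pmf snd R) s"
    have pz: "pz > 0" using z unfolding pz_def by (simp add: pmf_positive)
    have pa: "pz \<le> pa" "pa \<le> 1" unfolding pz_def pa_def zz by (rule pmf_le_fst, rule pmf_le_1)
    have ps: "pz \<le> ps" "ps \<le> 1" unfolding pz_def ps_def zz by (rule pmf_le_snd, rule pmf_le_1)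
    have "- log 2 pa \<le> - log 2 pz" using pz pa by simp
    also have "\<dots> = - log 2 ps + - log 2 (pz / ps)" using pz ps by (simp add: log_divide)
    finally have le: "- log 2 pa \<le> - log 2 ps + - log 2 (pz / ps)" .
    have n1: "- log 2 ps \<ge> 0" using ps pz log2_le_0[of ps] by simp
    have n2: "- log 2 (pz / ps) \<ge> 0" using ps pz log2_le_0[of "pz/ps"] by simp
    have le2: "ennreal (- log 2 pa) \<le> ennreal (- log 2 ps + - log 2 (pz / ps))" by (rule ennreal_leI[OF le])
    have eqs: "pmf (map_pmf fst R) (fst z) = pa" "pmf (map_pmf snd R) (snd z) = ps" "pmf R z = pz"
      by (simp_all add: zz pa_def ps_def pz_def)
    show "ennreal (- log 2 (pmf (map_pmf fst R) (fst z))) \<le> ennreal (- log 2 (pmf (map_pmf snd R) (snd z))) + ennreal (- log 2 (pmf R z / pmf (map_pmf snd R) (snd z)))"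
      unfolding eqs ennreal_plus[OF n1 n2, symmetric] by (rule le2)
  qed
  also have "\<dots> = (\<integral>\<^sup>+z. ennreal (- log 2 (pmf (map_pmf snd R) (snd z))) \<partial>measure_pmf R) + cond_entropy_pmf R"
    unfolding cond_entropy_integral by (rule nn_integral_add) simp_all
  also have "(\<integral>\<^sup>+z. ennreal (- log 2 (pmf (map_pmf snd R) (snd z))) \<partial>measure_pmf R) = entropy_pmf (map_pmf snd R)"
    unfolding entropy_integral by simp
  finally show ?thesis .
qed

lemma joint_marg:
  "map_pmf (\<lambda>z. h (fst z)) (joint_SXTY P K) = map_pmf h P"
  unfolding joint_SXTY_def map_bind_pmf map_pmf_comp by (simp add: map_pmf_const map_pmf_def[of h])




lemma pmf_bind_tag:
  assumes "\<And>a. set_pmf (F a) \<subseteq> {x. tag x = a}"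
  shows "pmf (bind_pmf A F) x = pmf A (tag x) * pmf (F (tag x)) x"
proof -
  have "pmf (bind_pmf A F) x = (\<integral>a. pmf (F a) x \<partial>A)" by (rule pmf_bind)
  also have "\<dots> = (\<Sum>a\<in>{tag x}. pmf (F a) x * pmf A a)"
  proof (rule integral_measure_pmf_real)
    fix a assume "pmf (F a) x \<noteq> 0"
    then have "x \<in> set_pmf (F a)" by (simp add: set_pmf_eq)
    then show "a \<in> {tag x}" using assms by auto
  qed simp
  finally show ?thesis by simp
qed

lemma mi_formula:
  fixes J :: "('a::countable \<times> 'b::countable) pmf"
  assumes "\<And>u. mi_term J u = pmf J u * G u" "\<And>u. G u \<ge> 0"
  shows "mutual_info_pmf J = (\<integral>\<^sup>+u. ennreal (G u) \<partial>measure_pmf J)"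
proof -
  have "(\<Sum>\<^sub>\<infinity>u. ennreal (mi_term J u)) = (\<Sum>\<^sub>\<infinity>u. ennreal (pmf J u) * ennreal (G u))"
    by (rule infsum_cong) (simp add: assms(1) ennreal_mult')
  also have "\<dots> = (\<integral>\<^sup>+u. ennreal (G u) \<partial>measure_pmf J)" by (rule infsum_pmf_nn_integral)
  finally have 1: "(\<Sum>\<^sub>\<infinity>u. ennreal (mi_term J u)) = (\<integral>\<^sup>+u. ennreal (G u) \<partial>measure_pmf J)" .
  have "(\<lambda>u. ennreal (- mi_term J u)) = (\<lambda>u. 0)"
  proof (rule ext)
    fix u
    have "- mi_term J u \<le> 0" unfolding assms(1) using assms(2)[of u] by simp
    then show "ennreal (- mi_term J u) = 0" by (simp add: ennreal_eq_0_iff)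
  qed
  then have 2: "(\<Sum>\<^sub>\<infinity>u. ennreal (- mi_term J u)) = 0" by (simp only:) simp
  show ?thesis unfolding mutual_info_pmf_def 1 2 by simp
qed

locale constr =
  fixes P :: "('s::finite \<times> 'x::countable \<times> 't::countable) pmf" and f :: "'t \<Rightarrow> 's" and lam :: real
  assumes det: "\<And>s x t. (s,x,t) \<in> set_pmf P \<Longrightarrow> s = f t"
    and lam0: "0 \<le> lam" and lam1: "lam \<le> 1"
begin

definition "PT = map_pmf (\<lambda>(s,x,t). t) P"
definition "PS = map_pmf (\<lambda>(s,x,t). s) P"
definition "q s = (if set_pmf PT \<inter> {t. f t = s} = {} then PT else cond_pmf PT {t. f t = s})"
definition "Wd s t = Pi_pmf UNIV t (\<lambda>s'. if s' = s then return_pmf t else q s')"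
definition "Zd s = map_pmf (\<lambda>b. if b then Some s else None) (bernoulli_pmf lam)"
definition "K0 s t = pair_pmf (Wd s t) (Zd s)"
definition "JT0 = bind_pmf PT (\<lambda>t. map_pmf (\<lambda>y0. (y0,t)) (K0 (f t) t))"
definition "JS0 = map_pmf (\<lambda>(y0,t). (y0, f t)) JT0"
definition "Pq w = (\<Prod>s\<in>UNIV. pmf (q s) (w s))"
definition "zf s z = (if z = Some s then lam else if z = None then 1 - lam else 0)"

lemma PS_eq: "PS = map_pmf f PT"
  unfolding PS_def PT_def map_pmf_comp by (rule map_pmf_cong) (auto dest: det)

lemma pT_le: "pmf PT t \<le> pmf PS (f t)"
  unfolding PS_eq by (rule pmf_map_ge)

lemma pq:
  assumes "pmf PS s > 0"
  shows "pmf (q s) t = (if f t = s then pmf PT t / pmf PS s else 0)"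
proof -
  have m: "measure PT {t. f t = s} = pmf PS s"
    unfolding PS_eq pmf_map by (rule arg_cong[where f="measure PT"]) auto
  have ne: "set_pmf PT \<inter> {t. f t = s} \<noteq> {}"
  proof
    assume "set_pmf PT \<inter> {t. f t = s} = {}"
    then have "measure PT ({t. f t = s} \<inter> set_pmf PT) = 0" by (simp add: Int_commute)
    then have "measure PT {t. f t = s} = 0" by (simp only: measure_Int_set_pmf)
    then show False using m assms by simp
  qed
  show ?thesis unfolding q_def using ne by (simp add: pmf_cond[OF ne] m)
qed

lemma pWd: "pmf (Wd s t) w = (if w s = t then (\<Prod>s'\<in>UNIV-{s}. pmf (q s') (w s')) else 0)"
proof -
  have "pmf (Wd s t) w = (\<Prod>s'\<in>UNIV. pmf (if s' = s then return_pmf t else q s') (w s'))"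
    unfolding Wd_def by (rule pmf_Pi') auto
  also have "\<dots> = pmf (return_pmf t) (w s) * (\<Prod>s'\<in>UNIV-{s}. pmf (if s' = s then return_pmf t else q s') (w s'))"
    by (subst prod.remove[of UNIV s]) auto
  also have "(\<Prod>s'\<in>UNIV-{s}. pmf (if s' = s then return_pmf t else q s') (w s')) = (\<Prod>s'\<in>UNIV-{s}. pmf (q s') (w s'))"
    by (rule prod.cong) auto
  finally show ?thesis by (simp add: indicator_def)
qed

lemma key: "pmf PT t * pmf (Wd (f t) t) w = (if w (f t) = t then pmf PS (f t) * Pq w else 0)"
proof (cases "w (f t) = t")
  case False then show ?thesis by (simp add: pWd)
next
  case True
  have Pq: "Pq w = pmf (q (f t)) t * (\<Prod>s'\<in>UNIV-{f t}. pmf (q s') (w s'))"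
    unfolding Pq_def using True by (subst prod.remove[of UNIV "f t"]) auto
  show ?thesis
  proof (cases "pmf PS (f t) > 0")
    case True
    then show ?thesis using \<open>w (f t) = t\<close> by (simp add: pWd Pq pq)
  next
    case False
    then have "pmf PS (f t) = 0" using pmf_nonneg[of PS "f t"] by linarith
    moreover then have "pmf PT t = 0" using pT_le[of t] pmf_nonneg[of PT t] by linarith
    ultimately show ?thesis by simp
  qed
qed

lemma pZd: "pmf (Zd s) z = zf s z"
proof -
  have inj: "inj (\<lambda>b. if b then Some s else None)" by (auto simp: inj_def split: if_splits)
  show ?thesis
  proof (cases z)
    case None
    then have "pmf (Zd s) z = pmf (bernoulli_pmf lam) False"
      unfolding Zd_def using pmf_map_inj'[OF inj, of _ False] by simp
    then show ?thesis using None lam0 lam1 by (simp add: zf_def)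
  next
    case (Some s')
    show ?thesis
    proof (cases "s' = s")
      case True
      then have "pmf (Zd s) z = pmf (bernoulli_pmf lam) True"
        unfolding Zd_def using pmf_map_inj'[OF inj, of _ True] Some by simp
      then show ?thesis using Some True lam0 lam1 by (simp add: zf_def)
    next
      case False
      then have "pmf (Zd s) z = 0" unfolding Zd_def using Some by (intro pmf_map_outside) auto
      then show ?thesis using Some False by (simp add: zf_def)
    qed
  qed
qed

lemma pJT0: "pmf JT0 ((w,z),t) = pmf PT t * pmf (Wd (f t) t) w * zf (f t) z"
proof -
  have 1: "pmf JT0 ((w,z),t) = pmf PT t * pmf (map_pmf (\<lambda>y0. (y0,t)) (K0 (f t) t)) ((w,z),t)"
  proof -
    have "pmf JT0 ((w,z),t) = pmf PT (snd ((w,z),t)) * pmf (map_pmf (\<lambda>y0. (y0, snd ((w,z),t))) (K0 (f (snd ((w,z),t))) (snd ((w,z),t)))) ((w,z),t)"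
      unfolding JT0_def by (rule pmf_bind_tag) force
    then show ?thesis by simp
  qed
  have 2: "pmf (map_pmf (\<lambda>y0. (y0,t)) (K0 (f t) t)) ((w,z),t) = pmf (K0 (f t) t) (w,z)"
    by (rule pmf_map_inj') (auto simp: inj_def)
  have 3: "pmf (K0 (f t) t) (w,z) = pmf (Wd (f t) t) w * zf (f t) z" unfolding K0_def pmf_pair pZd ..
  show ?thesis by (simp only: 1 2 3 mult.assoc)
qed

lemma pJT0': "pmf JT0 ((w,z),t) = (if w (f t) = t then pmf PS (f t) * Pq w * zf (f t) z else 0)"
  unfolding pJT0 key by simp

lemma measure_pmf_eq_sum:
  assumes "finite F" "F \<subseteq> B" "\<And>x. x \<in> B \<Longrightarrow> x \<notin> F \<Longrightarrow> pmf M x = 0"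
  shows "measure (measure_pmf M) B = sum (pmf M) F"
proof -
  have "B \<inter> set_pmf M = F \<inter> set_pmf M" using assms(2,3) by (auto simp: set_pmf_eq)
  then have "measure M B = measure M F" by (metis measure_Int_set_pmf)
  then show ?thesis using assms(1) by (simp add: measure_measure_pmf_finite)
qed

lemma pJS0: "pmf JS0 ((w,z),s) = pmf PS s * Pq w * zf s z"
proof -
  let ?g = "\<lambda>(y0::('s \<Rightarrow> 't) \<times> 's option, t::'t). (y0, f t)"
  have "pmf JS0 ((w,z),s) = measure JT0 (?g -` {((w,z),s)})" unfolding JS0_def pmf_map ..
  also have "\<dots> = sum (pmf JT0) (if f (w s) = s then {((w,z), w s)} else {})"
    by (rule measure_pmf_eq_sum) (auto simp: pJT0' split: if_splits)
  also have "\<dots> = pmf PS s * Pq w * zf s z"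
  proof (cases "f (w s) = s")
    case True then show ?thesis by (simp add: pJT0')
  next
    case False
    have "pmf PS s * Pq w = 0"
    proof (cases "pmf PS s > 0")
      case True
      then have "pmf (q s) (w s) = 0" using False by (simp add: pq)
      then have "Pq w = 0" unfolding Pq_def by (intro prod_zero) auto
      then show ?thesis by simp
    next
      case False
      then show ?thesis using pmf_nonneg[of PS s] by simp
    qed
    then show ?thesis using False by simp
  qed
  finally show ?thesis .
qed

definition "ZM z = (\<Sum>s\<in>UNIV. pmf PS s * zf s z)"

lemma fst_JS0: "map_pmf fst JS0 = map_pmf fst JT0"
  unfolding JS0_def map_pmf_comp by (rule map_pmf_cong) auto

lemma pY: "pmf (map_pmf fst JT0) (w,z) = Pq w * ZM z"
  unfolding fst_JS0[symmetric] pmf_fst_finite pJS0 ZM_def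
  by (simp add: sum_distrib_left mult_ac)

lemma ZM_None: "ZM None = 1 - lam"
proof -
  have "ZM None = (\<Sum>s\<in>UNIV. pmf PS s) * (1 - lam)"
    unfolding ZM_def zf_def by (simp add: sum_distrib_right)
  also have "(\<Sum>s\<in>UNIV. pmf PS s) = 1" by (rule sum_pmf_eq_1) auto
  finally show ?thesis by simp
qed

lemma ZM_Some: "ZM (Some s) = lam * pmf PS s"
proof -
  have "ZM (Some s) = (\<Sum>s'\<in>{s}. pmf PS s' * zf s' (Some s))"
    unfolding ZM_def by (rule sum.mono_neutral_right) (auto simp: zf_def)
  then show ?thesis by (simp add: zf_def)
qed

lemma snd_JT0: "map_pmf snd JT0 = PT"
  unfolding JT0_def map_bind_pmf map_pmf_comp by (simp add: map_pmf_const bind_return_pmf')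

lemma snd_JS0: "map_pmf snd JS0 = PS"
  unfolding JS0_def map_pmf_comp PS_eq snd_JT0[symmetric] by (rule map_pmf_cong) auto

definition "GSf u = (case u of ((w,z),s) \<Rightarrow> if z = None then 0 else - log 2 (pmf PS s))"
definition "GTf u = (case u of ((w,z),t) \<Rightarrow> log 2 (pmf PS (f t) / pmf PT t) + (if z = None then 0 else - log 2 (pmf PS (f t))))"

lemma miS: "mi_term JS0 u = pmf JS0 u * GSf u"
proof -
  obtain w z s where u: "u = ((w,z),s)" by (metis prod.collapse)
  show ?thesis
  proof (cases "pmf JS0 u = 0")
    case True then show ?thesis by (simp add: mi_term_def)
  next
    case False
    then have ne: "pmf PS s * Pq w * zf s z \<noteq> 0" unfolding u pJS0 .
    have ps: "pmf PS s > 0" using ne pmf_nonneg[of PS s] by (cases "pmf PS s = 0") auto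
    have pq0: "Pq w \<ge> 0" unfolding Pq_def by (simp add: prod_nonneg)
    have pqp: "Pq w > 0" using ne pq0 by (cases "Pq w = 0") auto
    have pY': "pmf (map_pmf fst JS0) (w,z) = Pq w * ZM z" unfolding fst_JS0 pY ..
    show ?thesis
    proof (cases z)
      case None
      then have l: "lam < 1" using ne lam1 by (auto simp: zf_def)
      show ?thesis unfolding u mi_term_def fst_conv snd_conv unfolding pJS0 pY' snd_JS0 GSf_def using None ps pqp l
        by (simp add: zf_def ZM_None)
    next
      case (Some s')
      then have ss: "s' = s" and l: "lam > 0" using ne lam0 by (auto simp: zf_def split: if_splits)
      have "log 2 (pmf PS s * Pq w * lam / (Pq w * (lam * pmf PS s) * pmf PS s)) = log 2 (1 / pmf PS s)"
        using ps pqp l by (intro arg_cong[where f="log 2"]) (simp add: field_simps)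
      also have lg1: "\<dots> = - log 2 (pmf PS s)" using ps by (simp add: log_divide)
      finally have lg: "log 2 (pmf PS s * Pq w * lam / (Pq w * (lam * pmf PS s) * pmf PS s)) = - log 2 (pmf PS s)" .
      show ?thesis unfolding u mi_term_def fst_conv snd_conv unfolding pJS0 pY' snd_JS0 GSf_def using Some ss
        by (simp add: zf_def ZM_Some lg lg1)
    qed
  qed
qed

lemma miT: "mi_term JT0 u = pmf JT0 u * GTf u"
proof -
  obtain w z t where u: "u = ((w,z),t)" by (metis prod.collapse)
  show ?thesis
  proof (cases "pmf JT0 u = 0")
    case True then show ?thesis by (simp add: mi_term_def)
  next
    case False
    then have ne: "pmf PT t * pmf (Wd (f t) t) w * zf (f t) z \<noteq> 0" unfolding u pJT0 .
    have pt: "pmf PT t > 0" using ne pmf_nonneg[of PT t] by (cases "pmf PT t = 0") auto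
    have ne2: "pmf PS (f t) * Pq w * zf (f t) z \<noteq> 0" and wt: "w (f t) = t"
      using False unfolding u pJT0' by (auto split: if_splits)
    have ps: "pmf PS (f t) > 0" using ne2 pmf_nonneg[of PS "f t"] by (cases "pmf PS (f t) = 0") auto
    have pq0: "Pq w \<ge> 0" unfolding Pq_def by (simp add: prod_nonneg)
    have pqp: "Pq w > 0" using ne2 pq0 by (cases "Pq w = 0") auto
    have pJ: "pmf JT0 u = pmf PS (f t) * Pq w * zf (f t) z" unfolding u pJT0' using wt by simp
    show ?thesis
    proof (cases z)
      case None
      then have l: "lam < 1" using ne2 lam1 by (auto simp: zf_def)
      have "log 2 (pmf PS (f t) * Pq w * (1 - lam) / (Pq w * (1 - lam) * pmf PT t)) = log 2 (pmf PS (f t) / pmf PT t)"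
        using pqp l pt by (intro arg_cong[where f="log 2"]) (simp add: field_simps)
      then show ?thesis unfolding mi_term_def pJ unfolding u fst_conv snd_conv pY snd_JT0 GTf_def using None
        by (simp add: zf_def ZM_None)
    next
      case (Some s')
      then have ss: "s' = f t" and l: "lam > 0" using ne2 lam0 by (auto simp: zf_def split: if_splits)
      have "log 2 (pmf PS (f t) * Pq w * lam / (Pq w * (lam * pmf PS (f t)) * pmf PT t)) = log 2 (1 / pmf PT t)"
        using ps pqp l pt by (intro arg_cong[where f="log 2"]) (simp add: field_simps)
      also have "\<dots> = log 2 (pmf PS (f t) / pmf PT t) + - log 2 (pmf PS (f t))" using ps pt by (simp add: log_divide)
      finally have lg: "log 2 (pmf PS (f t) * Pq w * lam / (Pq w * (lam * pmf PS (f t)) * pmf PT t)) = log 2 (pmf PS (f t) / pmf PT t) + - log 2 (pmf PS (f t))" .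
      have lg2: "log 2 (1 / pmf PT t) = log 2 (pmf PS (f t) / pmf PT t) - log 2 (pmf PS (f t))"
        using ps pt by (simp add: log_divide)
      show ?thesis unfolding mi_term_def pJ unfolding u fst_conv snd_conv pY snd_JT0 GTf_def using Some ss
        by (simp add: zf_def ZM_Some lg lg2)
    qed
  qed
qed

lemma GSf_alt: "GSf (y0, s) = (if snd y0 = None then 0 else - log 2 (pmf PS s))"
  by (cases y0) (simp add: GSf_def)

lemma GTf_alt: "GTf (y0, t) = log 2 (pmf PS (f t) / pmf PT t) + (if snd y0 = None then 0 else - log 2 (pmf PS (f t)))"
  by (cases y0) (simp add: GTf_def)

lemma neglogPS: "- log 2 (pmf PS s) \<ge> 0"
  using log2_le_0[of "pmf PS s"] pmf_le_1[of PS s] by simp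

lemma logratio: "log 2 (pmf PS (f t) / pmf PT t) \<ge> 0"
proof (cases "pmf PT t = 0")
  case True then show ?thesis by (simp add: log_def)
next
  case False
  then have "pmf PT t > 0" using pmf_nonneg[of PT t] by linarith
  then have "pmf PS (f t) / pmf PT t \<ge> 1" using pT_le[of t] by simp
  then show ?thesis by simp
qed

lemma GSf_nonneg: "GSf u \<ge> 0"
  using neglogPS by (cases u) (simp add: GSf_alt)

lemma GTf_nonneg: "GTf u \<ge> 0"
  using neglogPS logratio by (cases u) (simp add: GTf_alt add_nonneg_nonneg)

lemma intK:
  assumes c: "c \<ge> 0"
  shows "(\<integral>\<^sup>+y0. ennreal (if snd y0 = None then 0 else c) \<partial>measure_pmf (K0 s t)) = ennreal lam * ennreal c"
proof -
  have inner: "(\<integral>\<^sup>+b. ennreal (if b = None then 0 else c) \<partial>measure_pmf (Zd s)) = ennreal lam * ennreal c"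
    unfolding Zd_def using lam0 lam1 c by (simp add: mult.commute)
  show ?thesis unfolding K0_def nn_integral_pair_pmf'
    by (simp add: inner measure_pmf.emeasure_space_1)
qed

lemma intB:
  "(\<integral>\<^sup>+u. ennreal (if snd (fst u) = None then 0 else - log 2 (pmf PS (f (snd u)))) \<partial>measure_pmf JT0) = ennreal lam * entropy_pmf PS"
proof -
  have "(\<integral>\<^sup>+u. ennreal (if snd (fst u) = None then 0 else - log 2 (pmf PS (f (snd u)))) \<partial>measure_pmf JT0)
      = (\<integral>\<^sup>+t. \<integral>\<^sup>+y0. ennreal (if snd y0 = None then 0 else - log 2 (pmf PS (f t))) \<partial>measure_pmf (K0 (f t) t) \<partial>measure_pmf PT)"
    unfolding JT0_def nn_integral_bind_pmf nn_integral_map_pmf by (simp only: fst_conv snd_conv cong: if_cong)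
  also have "\<dots> = (\<integral>\<^sup>+t. ennreal lam * ennreal (- log 2 (pmf PS (f t))) \<partial>measure_pmf PT)"
    by (rule nn_integral_cong) (rule intK[OF neglogPS])
  also have "\<dots> = ennreal lam * (\<integral>\<^sup>+t. ennreal (- log 2 (pmf PS (f t))) \<partial>measure_pmf PT)"
    by (rule nn_integral_cmult) simp
  also have "(\<integral>\<^sup>+t. ennreal (- log 2 (pmf PS (f t))) \<partial>measure_pmf PT) = entropy_pmf PS"
    using nn_integral_map_pmf[where f="\<lambda>s. ennreal (- log 2 (pmf PS s))" and g=f and M=PT]
    unfolding entropy_integral PS_eq[symmetric] by simp
  finally show ?thesis .
qed

lemma MI_S: "mutual_info_pmf JS0 = ennreal lam * entropy_pmf PS"
proof -
  have "mutual_info_pmf JS0 = (\<integral>\<^sup>+u. ennreal (GSf u) \<partial>measure_pmf JS0)"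
    by (rule mi_formula[OF miS GSf_nonneg])
  also have "\<dots> = (\<integral>\<^sup>+u. ennreal (if snd (fst u) = None then 0 else - log 2 (pmf PS (f (snd u)))) \<partial>measure_pmf JT0)"
    unfolding JS0_def by (simp add: case_prod_unfold GSf_alt)
  finally show ?thesis unfolding intB .
qed

lemma MI_T: "mutual_info_pmf JT0 = (\<integral>\<^sup>+t. ennreal (log 2 (pmf PS (f t) / pmf PT t)) \<partial>measure_pmf PT) + ennreal lam * entropy_pmf PS"
proof -
  have "mutual_info_pmf JT0 = (\<integral>\<^sup>+u. ennreal (GTf u) \<partial>measure_pmf JT0)"
    by (rule mi_formula[OF miT GTf_nonneg])
  also have "\<dots> = (\<integral>\<^sup>+u. ennreal (log 2 (pmf PS (f (snd u)) / pmf PT (snd u))) + ennreal (if snd (fst u) = None then 0 else - log 2 (pmf PS (f (snd u)))) \<partial>measure_pmf JT0)"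
  proof (rule nn_integral_cong)
    fix u :: "(('s \<Rightarrow> 't) \<times> 's option) \<times> 't"
    obtain y0 t where u: "u = (y0,t)" by fastforce
    show "ennreal (GTf u) = ennreal (log 2 (pmf PS (f (snd u)) / pmf PT (snd u))) + ennreal (if snd (fst u) = None then 0 else - log 2 (pmf PS (f (snd u))))"
      unfolding u GTf_alt using logratio[of t] neglogPS[of "f t"] by (simp add: ennreal_plus)
  qed
  also have "\<dots> = (\<integral>\<^sup>+u. ennreal (log 2 (pmf PS (f (snd u)) / pmf PT (snd u))) \<partial>measure_pmf JT0) + ennreal lam * entropy_pmf PS"
    unfolding intB[symmetric] by (rule nn_integral_add) simp_all
  also have "(\<integral>\<^sup>+u. ennreal (log 2 (pmf PS (f (snd u)) / pmf PT (snd u))) \<partial>measure_pmf JT0) = (\<integral>\<^sup>+t. ennreal (log 2 (pmf PS (f t) / pmf PT t)) \<partial>measure_pmf PT)"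
    unfolding snd_JT0[symmetric] by simp
  finally show ?thesis .
qed

lemma CE_TS: "cond_entropy_pmf (map_pmf (\<lambda>(s,x,t). (t,s)) P) = (\<integral>\<^sup>+t. ennreal (log 2 (pmf PS (f t) / pmf PT t)) \<partial>measure_pmf PT)"
proof -
  define R where "R = map_pmf (\<lambda>(s,x,t). (t,s)) P"
  have R: "R = map_pmf (\<lambda>t. (t, f t)) PT"
    unfolding R_def PT_def map_pmf_comp by (rule map_pmf_cong) (auto dest: det)
  have Rs: "map_pmf snd R = PS" unfolding R map_pmf_comp PS_eq by (simp add: comp_def)
  have pR: "pmf R (t, f t) = pmf PT t" for t unfolding R by (rule pmf_map_inj') (auto simp: inj_def)
  have eq: "- log 2 (pmf PT t / pmf PS (f t)) = log 2 (pmf PS (f t) / pmf PT t)" for t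
  proof (cases "pmf PT t = 0")
    case True then show ?thesis by (simp add: log_def)
  next
    case False
    then have pt: "pmf PT t > 0" using pmf_nonneg[of PT t] by linarith
    then have ps: "pmf PS (f t) > 0" using pT_le[of t] by linarith
    show ?thesis using pt ps by (simp add: log_divide)
  qed
  have "cond_entropy_pmf R = (\<integral>\<^sup>+z. ennreal (- log 2 (pmf R z / pmf (map_pmf snd R) (snd z))) \<partial>measure_pmf R)"
    by (rule cond_entropy_integral)
  also have "\<dots> = (\<integral>\<^sup>+t. ennreal (- log 2 (pmf R (t, f t) / pmf (map_pmf snd R) (f t))) \<partial>measure_pmf PT)"
    using nn_integral_map_pmf[where f="\<lambda>z. ennreal (- log 2 (pmf R z / pmf (map_pmf snd R) (snd z)))" and g="\<lambda>t. (t, f t)" and M=PT]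
    unfolding R[symmetric] by simp
  also have "\<dots> = (\<integral>\<^sup>+t. ennreal (log 2 (pmf PS (f t) / pmf PT t)) \<partial>measure_pmf PT)"
    unfolding pR Rs eq ..
  finally show ?thesis unfolding R_def .
qed

definition "Kc = (\<lambda>(s::'s,x::'x,t::'t). map_pmf to_nat (K0 s t))"

lemma M2: "map_pmf (\<lambda>((s,x,t),y). (y,t)) (joint_SXTY P Kc) = map_pmf (map_prod to_nat id) JT0"
proof -
  have "map_pmf (\<lambda>((s,x,t),y). (y,t)) (joint_SXTY P Kc) = bind_pmf P (\<lambda>(s,x,t). map_pmf (\<lambda>y0. (to_nat y0, t)) (K0 (f t) t))"
    unfolding joint_SXTY_def map_bind_pmf
  proof (rule bind_pmf_cong[OF refl])
    fix w assume w: "w \<in> set_pmf P"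
    obtain s x t where ww: "w = (s,x,t)" by (metis prod.collapse)
    have "s = f t" using w det unfolding ww by blast
    then show "map_pmf (\<lambda>((s,x,t),y). (y,t)) (map_pmf (\<lambda>y. (w,y)) (Kc w)) = (case w of (s,x,t) \<Rightarrow> map_pmf (\<lambda>y0. (to_nat y0, t)) (K0 (f t) t))"
      unfolding ww Kc_def by (simp add: map_pmf_comp)
  qed
  also have "\<dots> = map_pmf (map_prod to_nat id) JT0"
    unfolding JT0_def PT_def map_bind_pmf bind_map_pmf by (simp add: map_pmf_comp case_prod_unfold)
  finally show ?thesis .
qed

lemma M1: "map_pmf (\<lambda>((s,x,t),y). (y,s)) (joint_SXTY P Kc) = map_pmf (map_prod to_nat id) JS0"
proof -
  have "map_pmf (\<lambda>((s,x,t),y). (y,s)) (joint_SXTY P Kc) = bind_pmf P (\<lambda>(s,x,t). map_pmf (\<lambda>y0. (to_nat y0, f t)) (K0 (f t) t))"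
    unfolding joint_SXTY_def map_bind_pmf
  proof (rule bind_pmf_cong[OF refl])
    fix w assume w: "w \<in> set_pmf P"
    obtain s x t where ww: "w = (s,x,t)" by (metis prod.collapse)
    have "s = f t" using w det unfolding ww by blast
    then show "map_pmf (\<lambda>((s,x,t),y). (y,s)) (map_pmf (\<lambda>y. (w,y)) (Kc w)) = (case w of (s,x,t) \<Rightarrow> map_pmf (\<lambda>y0. (to_nat y0, f t)) (K0 (f t) t))"
      unfolding ww Kc_def by (simp add: map_pmf_comp)
  qed
  also have "\<dots> = map_pmf (map_prod to_nat id) JS0"
    unfolding JS0_def JT0_def PT_def map_bind_pmf bind_map_pmf by (simp add: map_pmf_comp case_prod_unfold)
  finally show ?thesis .
qed

lemma MI_YS: "mutual_info_pmf (map_pmf (\<lambda>((s,x,t),y). (y,s)) (joint_SXTY P Kc)) = ennreal lam * entropy_pmf PS"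
  unfolding M1 by (simp add: mi_inj_fst MI_S)

lemma MI_YT: "mutual_info_pmf (map_pmf (\<lambda>((s,x,t),y). (y,t)) (joint_SXTY P Kc)) = cond_entropy_pmf (map_pmf (\<lambda>(s,x,t). (t,s)) P) + ennreal lam * entropy_pmf PS"
  unfolding M2 CE_TS by (simp add: mi_inj_fst MI_T)

end

lemma dpi_XY:
  fixes J :: "(('s::finite \<times> 'x::countable \<times> 't::countable) \<times> nat) pmf"
  shows "mutual_info_pmf (map_pmf (\<lambda>((s,x,t),y). (x,y)) J) \<le> mutual_info_pmf (map_pmf (\<lambda>((s,x,t),y). (y,s)) J) + cond_entropy_pmf (map_pmf (\<lambda>((s,x,t),y). (x,s)) J)"
proof -
  define Q where "Q = map_pmf (\<lambda>((s,x,t),y). (s,x,y)) J"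
  have 1: "map_pmf snd Q = map_pmf (\<lambda>((s,x,t),y). (x,y)) J" unfolding Q_def map_pmf_comp by (rule map_pmf_cong) auto
  have 2: "map_pmf (\<lambda>(s,x,y). (y,s)) Q = map_pmf (\<lambda>((s,x,t),y). (y,s)) J" unfolding Q_def map_pmf_comp by (rule map_pmf_cong) auto
  have 3: "map_pmf (\<lambda>(s,x,y). (x,s)) Q = map_pmf (\<lambda>((s,x,t),y). (x,s)) J" unfolding Q_def map_pmf_comp by (rule map_pmf_cong) auto
  show ?thesis using dpi[of Q] unfolding 1 2 3 .
qed

lemma dpi_TY:
  fixes J :: "(('s::finite \<times> 'x::countable \<times> 't::countable) \<times> nat) pmf"
  shows "mutual_info_pmf (map_pmf (\<lambda>((s,x,t),y). (y,t)) J) \<le> mutual_info_pmf (map_pmf (\<lambda>((s,x,t),y). (y,s)) J) + cond_entropy_pmf (map_pmf (\<lambda>((s,x,t),y). (t,s)) J)"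
proof -
  define Q where "Q = map_pmf (\<lambda>((s,x,t),y). (s,t,y)) J"
  have 1: "map_pmf snd Q = map_pmf (\<lambda>((s,x,t),y). (t,y)) J" unfolding Q_def map_pmf_comp by (rule map_pmf_cong) auto
  have 2: "map_pmf (\<lambda>(s,x,y). (y,s)) Q = map_pmf (\<lambda>((s,x,t),y). (y,s)) J" unfolding Q_def map_pmf_comp by (rule map_pmf_cong) auto
  have 3: "map_pmf (\<lambda>(s,x,y). (x,s)) Q = map_pmf (\<lambda>((s,x,t),y). (t,s)) J" unfolding Q_def map_pmf_comp by (rule map_pmf_cong) auto
  have 4: "map_pmf (\<lambda>((s,x,t),y). (y,t)) J = map_pmf prod.swap (map_pmf (\<lambda>((s,x,t),y). (t,y)) J)"
    unfolding map_pmf_comp by (rule map_pmf_cong) auto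
  show ?thesis using dpi[of Q] unfolding 1 2 3 4 mi_swap .
qed

lemma joint_marg':
  "map_pmf (\<lambda>((s,x,t),y). g s x t) (joint_SXTY P K) = map_pmf (\<lambda>(s,x,t). g s x t) P"
proof -
  have "map_pmf (\<lambda>((s,x,t),y). g s x t) (joint_SXTY P K) = map_pmf (\<lambda>z. (\<lambda>(s,x,t). g s x t) (fst z)) (joint_SXTY P K)"
    by (rule map_pmf_cong) auto
  then show ?thesis by (simp only: joint_marg)
qed

theorem mainTheorem5:
  fixes P :: "('s::finite \<times> 'x::countable \<times> 't::countable) pmf"
    and f :: "'t \<Rightarrow> 's" and \<epsilon> r :: real
  assumes finS: "entropy_pmf (map_pmf (\<lambda>(s,x,t). s) P) \<noteq> \<top>"
    and finX: "entropy_pmf (map_pmf (\<lambda>(s,x,t). x) P) \<noteq> \<top>"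
    and finT: "entropy_pmf (map_pmf (\<lambda>(s,x,t). t) P) \<noteq> \<top>"
    and det: "\<forall>(s,x,t) \<in> set_pmf P. s = f t"
    and eps: "\<epsilon> \<ge> 0" and rnn: "r \<ge> 0"
    and lower: "cond_entropy_pmf (map_pmf (\<lambda>(s,x,t). (x,s)) P) + ennreal \<epsilon> \<le> ennreal r"
    and upper: "ennreal r < entropy_pmf (map_pmf (\<lambda>(s,x,t). x) P)"
  shows "g_fun r \<epsilon> P = cond_entropy_pmf (map_pmf (\<lambda>(s,x,t). (t,s)) P) + ennreal \<epsilon>"
proof -
  define HS where "HS = entropy_pmf (map_pmf (\<lambda>(s,x,t). s) P)"
  define CEX where "CEX = cond_entropy_pmf (map_pmf (\<lambda>(s,x,t). (x,s)) P)"
  define CET where "CET = cond_entropy_pmf (map_pmf (\<lambda>(s,x,t). (t,s)) P)"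
  have m1: "map_pmf fst (map_pmf (\<lambda>(s,x,t). (x,s)) P) = map_pmf (\<lambda>(s,x,t). x) P"
    unfolding map_pmf_comp by (rule map_pmf_cong) auto
  have m2: "map_pmf snd (map_pmf (\<lambda>(s,x,t). (x,s)) P) = map_pmf (\<lambda>(s,x,t). s) P"
    unfolding map_pmf_comp by (rule map_pmf_cong) auto
  have chain: "entropy_pmf (map_pmf (\<lambda>(s,x,t). x) P) \<le> HS + CEX"
    using entropy_le_chain[of "map_pmf (\<lambda>(s,x,t). (x,s)) P"] unfolding HS_def CEX_def m1 m2 .
  have CEXfin: "CEX \<noteq> \<top>" using lower unfolding CEX_def by (auto simp: top_unique)
  have HSfin: "HS \<noteq> \<top>" using finS unfolding HS_def .
  have lt0: "CEX + ennreal \<epsilon> < entropy_pmf (map_pmf (\<lambda>(s,x,t). x) P)"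
    using lower upper unfolding CEX_def[symmetric] by (rule le_less_trans)
  have lt1: "CEX + ennreal \<epsilon> < HS + CEX" using lt0 chain by (rule less_le_trans)
  have lt: "CEX + ennreal \<epsilon> < CEX + HS" using lt1 by (simp only: add.commute)
  have epsHS: "ennreal \<epsilon> < HS"
    using lt CEXfin by (metis ennreal_add_left_cancel_less)
  define hS where "hS = enn2real HS"
  have HS_eq: "HS = ennreal hS" unfolding hS_def using HSfin by (simp add: ennreal_enn2real_if)
  have hS0: "hS \<ge> 0" unfolding hS_def by simp
  have epshS: "\<epsilon> < hS" using epsHS hS0 eps unfolding HS_eq by (simp add: ennreal_less_iff)
  define lam where "lam = \<epsilon> / hS"
  have lam0: "0 \<le> lam" unfolding lam_def using eps hS0 by simp
  have lam1: "lam \<le> 1" unfolding lam_def using eps epshS by simp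
  have lamHS: "ennreal lam * HS = ennreal \<epsilon>"
    unfolding HS_eq lam_def using eps epshS hS0 by (simp add: ennreal_mult''[symmetric])
  interpret C: constr P f lam
    by unfold_locales (use det lam0 lam1 in auto)
  have PS: "C.PS = map_pmf (\<lambda>(s,x,t). s) P" by (rule C.PS_def)
  let ?J = "joint_SXTY P C.Kc"
  have YS: "mutual_info_pmf (map_pmf (\<lambda>((s,x,t),y). (y,s)) ?J) = ennreal \<epsilon>"
    unfolding C.MI_YS PS HS_def[symmetric] lamHS ..
  have YT: "mutual_info_pmf (map_pmf (\<lambda>((s,x,t),y). (y,t)) ?J) = CET + ennreal \<epsilon>"
    unfolding C.MI_YT PS HS_def[symmetric] lamHS CET_def ..
  have XY: "mutual_info_pmf (map_pmf (\<lambda>((s,x,t),y). (x,y)) ?J) \<le> ennreal r"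
  proof -
    have "mutual_info_pmf (map_pmf (\<lambda>((s,x,t),y). (x,y)) ?J) \<le> ennreal \<epsilon> + CEX"
      using dpi_XY[of ?J] unfolding YS joint_marg'[where g="\<lambda>s x t. (x,s)"] CEX_def .
    also have "\<dots> \<le> ennreal r" using lower unfolding CEX_def by (simp add: add.commute)
    finally show ?thesis .
  qed
  show ?thesis
    unfolding g_fun_def CET_def[symmetric]
  proof (rule antisym)
    show "(SUP K\<in>{K. mutual_info_pmf (map_pmf (\<lambda>((s,x,t),y). (y,s)) (joint_SXTY P K)) \<le> ennreal \<epsilon>
               \<and> mutual_info_pmf (map_pmf (\<lambda>((s,x,t),y). (x,y)) (joint_SXTY P K)) \<le> ennreal r}.
        mutual_info_pmf (map_pmf (\<lambda>((s,x,t),y). (y,t)) (joint_SXTY P K))) \<le> CET + ennreal \<epsilon>"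
    proof (rule SUP_least)
      fix K assume "K \<in> {K. mutual_info_pmf (map_pmf (\<lambda>((s,x,t),y). (y,s)) (joint_SXTY P K)) \<le> ennreal \<epsilon>
               \<and> mutual_info_pmf (map_pmf (\<lambda>((s,x,t),y). (x,y)) (joint_SXTY P K)) \<le> ennreal r}"
      then have K: "mutual_info_pmf (map_pmf (\<lambda>((s,x,t),y). (y,s)) (joint_SXTY P K)) \<le> ennreal \<epsilon>" by simp
      have "mutual_info_pmf (map_pmf (\<lambda>((s,x,t),y). (y,t)) (joint_SXTY P K)) \<le>
          mutual_info_pmf (map_pmf (\<lambda>((s,x,t),y). (y,s)) (joint_SXTY P K)) + CET"
        using dpi_TY[of "joint_SXTY P K"] unfolding joint_marg'[where g="\<lambda>s x t. (t,s)"] CET_def .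
      also have "\<dots> \<le> ennreal \<epsilon> + CET" using K by (rule add_right_mono)
      finally show "mutual_info_pmf (map_pmf (\<lambda>((s,x,t),y). (y,t)) (joint_SXTY P K)) \<le> CET + ennreal \<epsilon>"
        by (simp add: add.commute)
    qed
    show "CET + ennreal \<epsilon> \<le> (SUP K\<in>{K. mutual_info_pmf (map_pmf (\<lambda>((s,x,t),y). (y,s)) (joint_SXTY P K)) \<le> ennreal \<epsilon>
               \<and> mutual_info_pmf (map_pmf (\<lambda>((s,x,t),y). (x,y)) (joint_SXTY P K)) \<le> ennreal r}.
        mutual_info_pmf (map_pmf (\<lambda>((s,x,t),y). (y,t)) (joint_SXTY P K)))"
      by (rule SUP_upper2[where i=C.Kc]) (use YS XY YT in auto)
  qed
qed


end
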